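(* Let $A,B$ be disjoint subsets of $S$, and let $a\in A$, $b\in B$, $c\in S$ satisfy $r(c,a)>r(a,c)>0$ and $r(c,b)>r(b,c)>0$. Then, as $N\to\infty$, $$\sup_{0\le i\le\lfloor N/2\rfloor}\left|h_{\mathcal{E}_N(A),\mathcal{E}_N(B)}(\zeta_i^{a,c})-1\right|=o(1)\quad\text{and}\quad\sup_{0\le i\le\lfloor N/2\rfloor}h_{\mathcal{E}_N(A),\mathcal{E}_N(B)}(\zeta_i^{b,c})=o(1).$$
   Context: $S$ is a finite set, $r:S\times S\to[0,\infty)$ transition rates of an irreducible continuous-time random walk on $S$ with $r(x,x)=0$, reversible w.r.t. a probability measure $m$. $(d_N)$ positive with $d_N\to0$ and $d_N\log N\to0$. $\mathcal{H}_N=\{\eta\in\mathbb{N}^S:\sum_x\eta_x=N\}$; the inclusion process is the Markov chain on $\mathcal{H}_N$ with generator $(\mathcal{L}_Nf)(\eta)=\sum_{x,y}\eta_x(d_N+\eta_y)r(x,y)\{f(\sigma^{x,y}\eta)-f(\eta)\}$, $\sigma^{x,y}\eta$ moving one particle from $x$ to $y$ if possible. $\xi_N^x$: all $N$ particles at $x$; $\mathcal{E}_N(A)=\{\xi_N^x:x\in A\}$. $h_{\mathcal{A},\mathcal{B}}(\eta)=\mathbb{P}_\eta[\tau_{\mathcal{A}}<\tau_{\mathcal{B}}]$ with $\tau$ hitting times. For $x,y\in S$ and $0\le i\le N$, $\zeta_i^{x,y}$ is the configuration with $N-i$ particles at $x$, $i$ particles at $y$ and none elsewhere. *)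

theory Defs
  imports "HOL-Analysis.Analysis"
begin

text \<open>Generic hitting probabilities for a discrete-time jump chain with transition
  probabilities P on a finite state space X:
  h(A,B)(eta) = P_eta[tau_A < tau_B], computed as the sum, over all finite paths
  eta = eta_0, eta_1, ..., eta_k with eta_k in A and eta_0,...,eta_(k-1) not in A or B,
  of the path probabilities.  A continuous-time chain and its embedded jump chain
  have the same hitting probabilities.\<close>

fun path_prob :: "('s \<Rightarrow> 's \<Rightarrow> real) \<Rightarrow> 's \<Rightarrow> 's list \<Rightarrow> real" where
  "path_prob P x [] = 1"
| "path_prob P x (y # ys) = P x y * path_prob P y ys"

definition hit_paths :: "'s set \<Rightarrow> 's set \<Rightarrow> 's set \<Rightarrow> nat \<Rightarrow> 's list set" where
  "hit_paths X A B n = {ys. length ys = n \<and> set ys \<subseteq> X \<and> ys \<noteq> [] \<and> last ys \<in> A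
      \<and> (\<forall>y\<in>set (butlast ys). y \<notin> A \<and> y \<notin> B)}"

definition hit_prob :: "('s \<Rightarrow> 's \<Rightarrow> real) \<Rightarrow> 's set \<Rightarrow> 's set \<Rightarrow> 's set \<Rightarrow> 's \<Rightarrow> real" where
  "hit_prob P X A B x =
     (if x \<in> A then 1 else if x \<in> B then 0
      else (\<Sum>n. \<Sum>ys\<in>hit_paths X A B (Suc n). path_prob P x ys))"

text \<open>The inclusion process on S = UNIV :: 'a set (finite type).\<close>

definition config_space :: "nat \<Rightarrow> ('a::finite \<Rightarrow> nat) set" where
  "config_space N = {\<eta>. (\<Sum>x\<in>UNIV. \<eta> x) = N}"

definition sigma_move :: "'a \<Rightarrow> 'a \<Rightarrow> ('a \<Rightarrow> nat) \<Rightarrow> ('a \<Rightarrow> nat)" where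
  "sigma_move x y \<eta> =
     (if 0 < \<eta> x then (\<lambda>z. \<eta> z - (if z = x then 1 else 0) + (if z = y then 1 else 0)) else \<eta>)"

text \<open>Jump rate from eta to zeta (zeta different from eta) of the generator
  (L f)(eta) = sum_{x,y} eta_x (d + eta_y) r(x,y) (f(sigma^{x,y} eta) - f(eta)).\<close>
definition incl_rate :: "('a::finite \<Rightarrow> 'a \<Rightarrow> real) \<Rightarrow> real \<Rightarrow> ('a \<Rightarrow> nat) \<Rightarrow> ('a \<Rightarrow> nat) \<Rightarrow> real" where
  "incl_rate r d \<eta> \<zeta> =
     (\<Sum>x\<in>UNIV. \<Sum>y\<in>UNIV. if sigma_move x y \<eta> = \<zeta> \<and> \<zeta> \<noteq> \<eta>
                              then real (\<eta> x) * (d + real (\<eta> y)) * r x y else 0)"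

definition incl_total_rate :: "('a::finite \<Rightarrow> 'a \<Rightarrow> real) \<Rightarrow> real \<Rightarrow> nat \<Rightarrow> ('a \<Rightarrow> nat) \<Rightarrow> real" where
  "incl_total_rate r d N \<eta> = (\<Sum>\<zeta>\<in>config_space N. incl_rate r d \<eta> \<zeta>)"

definition incl_jump :: "('a::finite \<Rightarrow> 'a \<Rightarrow> real) \<Rightarrow> real \<Rightarrow> nat \<Rightarrow> ('a \<Rightarrow> nat) \<Rightarrow> ('a \<Rightarrow> nat) \<Rightarrow> real" where
  "incl_jump r d N \<eta> \<zeta> = incl_rate r d \<eta> \<zeta> / incl_total_rate r d N \<eta>"

definition incl_hit :: "('a::finite \<Rightarrow> 'a \<Rightarrow> real) \<Rightarrow> real \<Rightarrow> nat \<Rightarrow> ('a \<Rightarrow> nat) set \<Rightarrow> ('a \<Rightarrow> nat) set \<Rightarrow> ('a \<Rightarrow> nat) \<Rightarrow> real" where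
  "incl_hit r d N \<A> \<B> \<eta> = hit_prob (incl_jump r d N) (config_space N) \<A> \<B> \<eta>"

definition xi_conf :: "nat \<Rightarrow> 'a \<Rightarrow> ('a \<Rightarrow> nat)" where
  "xi_conf N x = (\<lambda>z. if z = x then N else 0)"

definition E_set :: "nat \<Rightarrow> 'a set \<Rightarrow> ('a \<Rightarrow> nat) set" where
  "E_set N A = xi_conf N ` A"

definition zeta_conf :: "nat \<Rightarrow> 'a \<Rightarrow> 'a \<Rightarrow> nat \<Rightarrow> ('a \<Rightarrow> nat)" where
  "zeta_conf N x y i = (\<lambda>z. if z = x then N - i else if z = y then i else 0)"

definition irreducible_rates :: "('a \<Rightarrow> 'a \<Rightarrow> real) \<Rightarrow> bool" where
  "irreducible_rates r \<longleftrightarrow> (\<forall>x y. x \<noteq> y \<longrightarrow> (x, y) \<in> {(u, v). 0 < r u v}\<^sup>+)"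

end

theory Submission
  imports Defs
begin

lemma hit_paths_one: "hit_paths X A B (Suc 0) = (\<lambda>z. [z]) ` (X \<inter> A)"
proof (rule set_eqI, rule iffI)
  fix ys assume "ys \<in> hit_paths X A B (Suc 0)"
  then obtain z where "ys = [z]" "z \<in> X" "z \<in> A"
    by (auto simp: hit_paths_def length_Suc_conv)
  then show "ys \<in> (\<lambda>z. [z]) ` (X \<inter> A)" by auto
qed (auto simp: hit_paths_def)

lemma hit_paths_SucSuc:
  "hit_paths X A B (Suc (Suc n)) = (\<lambda>(z,ys). z#ys) ` ((X - A - B) \<times> hit_paths X A B (Suc n))"
proof (rule set_eqI, rule iffI)
  fix ys assume "ys \<in> hit_paths X A B (Suc (Suc n))"
  then obtain z zs where zs: "ys = z # zs" "length zs = Suc n"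
    by (auto simp: hit_paths_def length_Suc_conv)
  then have "zs \<noteq> []" by auto
  then have "butlast ys = z # butlast zs" "last ys = last zs" using zs by auto
  then show "ys \<in> (\<lambda>(z,ys). z#ys) ` ((X - A - B) \<times> hit_paths X A B (Suc n))"
    using \<open>ys \<in> _\<close> zs \<open>zs \<noteq> []\<close> by (auto simp: hit_paths_def)
next
  fix ys assume "ys \<in> (\<lambda>(z,ys). z#ys) ` ((X - A - B) \<times> hit_paths X A B (Suc n))"
  then obtain z zs where zs: "ys = z # zs" "z \<in> X - A - B" "zs \<in> hit_paths X A B (Suc n)" by auto
  then have "zs \<noteq> []" by (auto simp: hit_paths_def)
  then have "butlast ys = z # butlast zs" "last ys = last zs" using zs by auto
  then show "ys \<in> hit_paths X A B (Suc (Suc n))"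
    using zs \<open>zs \<noteq> []\<close> by (auto simp: hit_paths_def)
qed

definition Tn :: "('s \<Rightarrow> 's \<Rightarrow> real) \<Rightarrow> 's set \<Rightarrow> 's set \<Rightarrow> 's set \<Rightarrow> nat \<Rightarrow> 's \<Rightarrow> real" where
  "Tn P X A B n x = (\<Sum>ys\<in>hit_paths X A B (Suc n). path_prob P x ys)"

lemma Tn_0: "Tn P X A B 0 x = (\<Sum>z\<in>X \<inter> A. P x z)"
  unfolding Tn_def hit_paths_one by (subst sum.reindex) (auto simp: inj_on_def)

lemma Tn_Suc: assumes "finite X"
  shows "Tn P X A B (Suc n) x = (\<Sum>z\<in>X - A - B. P x z * Tn P X A B n z)"
proof -
  have fin: "finite (hit_paths X A B (Suc n))"
  proof -
    have "hit_paths X A B (Suc n) \<subseteq> {ys. set ys \<subseteq> X \<and> length ys = Suc n}"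
      by (auto simp: hit_paths_def)
    moreover have "finite {ys. set ys \<subseteq> X \<and> length ys = Suc n}"
      using finite_lists_length_eq[OF assms] by simp
    ultimately show ?thesis by (rule finite_subset)
  qed
  have "Tn P X A B (Suc n) x = (\<Sum>p\<in>(X - A - B) \<times> hit_paths X A B (Suc n). path_prob P x (fst p # snd p))"
    unfolding Tn_def hit_paths_SucSuc
    by (subst sum.reindex) (auto simp: inj_on_def case_prod_beta)
  also have "\<dots> = (\<Sum>z\<in>X - A - B. \<Sum>ys\<in>hit_paths X A B (Suc n). path_prob P x (z # ys))"
    by (simp add: sum.cartesian_product case_prod_beta)
  also have "\<dots> = (\<Sum>z\<in>X - A - B. P x z * Tn P X A B n z)"
    by (simp add: Tn_def sum_distrib_left)
  finally show ?thesis .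
qed

locale kernel =
  fixes P :: "'s \<Rightarrow> 's \<Rightarrow> real" and X :: "'s set"
  assumes finX: "finite X"
    and Pnn: "\<And>x y. x \<in> X \<Longrightarrow> y \<in> X \<Longrightarrow> 0 \<le> P x y"
    and Prow: "\<And>x. x \<in> X \<Longrightarrow> (\<Sum>y\<in>X. P x y) \<le> 1"
begin

lemma Tn_nonneg: "x \<in> X \<Longrightarrow> 0 \<le> Tn P X A B n x"
proof (induction n arbitrary: x)
  case 0 then show ?case by (auto simp: Tn_0 intro!: sum_nonneg Pnn)
next
  case (Suc n) then show ?case by (auto simp: Tn_Suc[OF finX] intro!: sum_nonneg mult_nonneg_nonneg Pnn)
qed

lemma Tn_partial: "x \<in> X \<Longrightarrow> (\<Sum>n<M. Tn P X A B n x) \<le> 1"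
proof (induction M arbitrary: x)
  case 0 then show ?case by simp
next
  case (Suc M)
  have "(\<Sum>n<Suc M. Tn P X A B n x) = Tn P X A B 0 x + (\<Sum>n<M. Tn P X A B (Suc n) x)"
    by (rule sum.lessThan_Suc_shift)
  also have "\<dots> = (\<Sum>z\<in>X \<inter> A. P x z) + (\<Sum>z\<in>X - A - B. P x z * (\<Sum>n<M. Tn P X A B n z))"
    by (simp add: Tn_0 Tn_Suc[OF finX] sum_distrib_left sum.swap[of _ "{..<M}"])
  also have "\<dots> \<le> (\<Sum>z\<in>X \<inter> A. P x z) + (\<Sum>z\<in>X - A - B. P x z)"
    apply (rule add_left_mono, rule sum_mono)
    using Suc Pnn by (simp add: mult_left_le)
  also have "\<dots> \<le> (\<Sum>z\<in>X. P x z)"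
  proof -
    have "(\<Sum>z\<in>X \<inter> A. P x z) + (\<Sum>z\<in>X - A - B. P x z) = (\<Sum>z\<in>(X \<inter> A) \<union> (X - A - B). P x z)"
      by (rule sum.union_disjoint[symmetric]) (use finX in auto)
    also have "\<dots> \<le> (\<Sum>z\<in>X. P x z)"
      by (rule sum_mono2) (use finX Suc Pnn in auto)
    finally show ?thesis .
  qed
  also have "\<dots> \<le> 1" using Prow Suc by auto
  finally show ?case .
qed

lemma Tn_summable: "x \<in> X \<Longrightarrow> summable (\<lambda>n. Tn P X A B n x)"
  by (rule summableI_nonneg_bounded[where x=1]) (auto intro: Tn_nonneg Tn_partial)

lemma hit_prob_alt: "x \<notin> A \<Longrightarrow> x \<notin> B \<Longrightarrow> hit_prob P X A B x = (\<Sum>n. Tn P X A B n x)"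
  by (simp add: hit_prob_def Tn_def)

lemma hit_prob_bounds: "x \<in> X \<Longrightarrow> 0 \<le> hit_prob P X A B x \<and> hit_prob P X A B x \<le> 1"
proof (cases "x \<in> A \<or> x \<in> B")
  case True then show ?thesis by (auto simp: hit_prob_def)
next
  case False
  assume x: "x \<in> X"
  then show ?thesis using False
    by (auto simp: hit_prob_alt intro!: suminf_nonneg suminf_le_const Tn_summable Tn_nonneg Tn_partial)
qed

lemma hit_prob_harmonic:
  assumes x: "x \<in> X" "x \<notin> A" "x \<notin> B"
  shows "hit_prob P X A B x = (\<Sum>y\<in>X. P x y * hit_prob P X A B y)"
proof -
  let ?h = "hit_prob P X A B"
  have "?h x = (\<Sum>n. Tn P X A B n x)" using x by (simp add: hit_prob_alt)
  also have "\<dots> = (\<Sum>n. Tn P X A B (Suc n) x) + Tn P X A B 0 x"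
    using suminf_split_head[OF Tn_summable[OF x(1)]] by simp
  also have "(\<Sum>n. Tn P X A B (Suc n) x) = (\<Sum>n. \<Sum>z\<in>X - A - B. P x z * Tn P X A B n z)"
    by (simp add: Tn_Suc[OF finX])
  also have "\<dots> = (\<Sum>z\<in>X - A - B. \<Sum>n. P x z * Tn P X A B n z)"
    by (rule suminf_sum) (auto intro!: summable_mult Tn_summable)
  also have "\<dots> = (\<Sum>z\<in>X - A - B. P x z * ?h z)"
    by (intro sum.cong refl) (auto simp: suminf_mult hit_prob_alt Tn_summable)
  finally have 1: "?h x = (\<Sum>z\<in>X - A - B. P x z * ?h z) + (\<Sum>z\<in>X \<inter> A. P x z * ?h z)"
    by (simp add: Tn_0 hit_prob_def)
  have "(\<Sum>y\<in>X. P x y * ?h y) = (\<Sum>y\<in>(X - A - B) \<union> (X \<inter> A) \<union> (X \<inter> B - A). P x y * ?h y)"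
    by (rule sum.cong) auto
  also have "\<dots> = (\<Sum>z\<in>X - A - B. P x z * ?h z) + (\<Sum>z\<in>X \<inter> A. P x z * ?h z) + (\<Sum>z\<in>X \<inter> B - A. P x z * ?h z)"
    using finX by (subst sum.union_disjoint, auto)+
  also have "(\<Sum>z\<in>X \<inter> B - A. P x z * ?h z) = 0"
    by (rule sum.neutral) (auto simp: hit_prob_def)
  finally show ?thesis using 1 by simp
qed

lemma harm_two_split:
  assumes "y1 \<in> X" "y2 \<in> X" "y1 \<noteq> y2"
  shows "(\<Sum>y\<in>X. f y) = f y1 + f y2 + (\<Sum>y\<in>X - {y1, y2}. f y)"
proof -
  have "(\<Sum>y\<in>X. f y) = (\<Sum>y\<in>{y1,y2}. f y) + (\<Sum>y\<in>X - {y1, y2}. f y)"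
    using assms finX by (metis (no_types, lifting) empty_subsetI insert_subset sum.subset_diff finite.emptyI finite.insertI add.commute)
  then show ?thesis using assms by simp
qed

lemma harm_lower:
  assumes x: "x \<in> X" "x \<notin> A" "x \<notin> B" and y: "y1 \<in> X" "y2 \<in> X" "y1 \<noteq> y2"
    and p: "0 \<le> p1" "p1 \<le> P x y1" "0 \<le> p2" "p2 \<le> P x y2"
  shows "p1 * hit_prob P X A B y1 + p2 * hit_prob P X A B y2 \<le> hit_prob P X A B x"
proof -
  let ?h = "hit_prob P X A B"
  have hb: "0 \<le> ?h y" "?h y \<le> 1" if "y \<in> X" for y using hit_prob_bounds[OF that] by auto
  have "p1 * ?h y1 + p2 * ?h y2 \<le> P x y1 * ?h y1 + P x y2 * ?h y2"
    by (intro add_mono mult_right_mono) (use p hb y in auto)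
  also have "\<dots> \<le> P x y1 * ?h y1 + P x y2 * ?h y2 + (\<Sum>y\<in>X - {y1, y2}. P x y * ?h y)"
    using Pnn[OF x(1)] hb by (auto intro!: sum_nonneg)
  also have "\<dots> = ?h x" using hit_prob_harmonic[OF x] harm_two_split[OF y, of "\<lambda>y. P x y * ?h y"] by simp
  finally show ?thesis .
qed

lemma harm_upper:
  assumes x: "x \<in> X" "x \<notin> A" "x \<notin> B" and y: "y1 \<in> X" "y2 \<in> X" "y1 \<noteq> y2"
    and p: "0 \<le> p1" "p1 \<le> P x y1" "0 \<le> p2" "p2 \<le> P x y2"
  shows "hit_prob P X A B x \<le> p1 * hit_prob P X A B y1 + p2 * hit_prob P X A B y2 + (1 - p1 - p2)"
proof -
  let ?h = "hit_prob P X A B"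
  have hb: "0 \<le> ?h y" "?h y \<le> 1" if "y \<in> X" for y using hit_prob_bounds[OF that] by auto
  have "?h x = P x y1 * ?h y1 + P x y2 * ?h y2 + (\<Sum>y\<in>X - {y1, y2}. P x y * ?h y)"
    using hit_prob_harmonic[OF x] harm_two_split[OF y, of "\<lambda>y. P x y * ?h y"] by simp
  also have "(\<Sum>y\<in>X - {y1, y2}. P x y * ?h y) \<le> (\<Sum>y\<in>X - {y1, y2}. P x y)"
    using Pnn[OF x(1)] hb by (auto intro!: sum_mono simp: mult_left_le)
  also have "(\<Sum>y\<in>X - {y1, y2}. P x y) = (\<Sum>y\<in>X. P x y) - P x y1 - P x y2"
    using harm_two_split[OF y, of "P x"] by simp
  also have "\<dots> \<le> 1 - P x y1 - P x y2" using Prow[OF x(1)] by simp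
  finally have 1: "?h x \<le> 1 - P x y1 * (1 - ?h y1) - P x y2 * (1 - ?h y2)" by (simp add: algebra_simps)
  have "P x y1 * (1 - ?h y1) \<ge> p1 * (1 - ?h y1)" "P x y2 * (1 - ?h y2) \<ge> p2 * (1 - ?h y2)"
    by (intro mult_right_mono; use p hb y in auto)+
  with 1 show ?thesis by (simp add: algebra_simps)
qed

end

lemma config_fin: "finite (config_space N :: ('a::finite \<Rightarrow> nat) set)"
proof -
  have "config_space N \<subseteq> (Pi\<^sub>E (UNIV::'a set) (\<lambda>_. {..N}))"
  proof
    fix \<eta> :: "'a \<Rightarrow> nat" assume "\<eta> \<in> config_space N"
    then have "\<eta> z \<le> N" for z
      unfolding config_space_def using member_le_sum[of z UNIV \<eta>] by auto
    then show "\<eta> \<in> Pi\<^sub>E UNIV (\<lambda>_. {..N})" by (auto simp: PiE_UNIV_domain)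
  qed
  moreover have "finite (Pi\<^sub>E (UNIV::'a set) (\<lambda>_. {..N}))" by (rule finite_PiE) auto
  ultimately show ?thesis by (rule finite_subset)
qed

lemma sigma_config: assumes "\<eta> \<in> config_space N" shows "sigma_move x y \<eta> \<in> config_space N"
proof (cases "0 < \<eta> x")
  case True
  let ?f = "\<lambda>z. \<eta> z - (if z = x then 1 else 0) + (if z = y then 1 else 0)"
  have eq: "\<And>z. ?f z + (if z = x then 1 else 0) = \<eta> z + (if z = y then 1 else 0)"
    using True by auto
  have "(\<Sum>z\<in>UNIV. ?f z + (if z = x then 1 else 0)) = (\<Sum>z\<in>UNIV. \<eta> z + (if z = y then 1 else 0))"
    by (rule sum.cong[OF refl], rule eq)
  then have "(\<Sum>z\<in>UNIV. ?f z) + 1 = (\<Sum>z\<in>UNIV. \<eta> z) + 1"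
    by (simp add: sum.distrib)
  then show ?thesis using assms True by (simp add: config_space_def sigma_move_def)
qed (use assms in \<open>simp add: sigma_move_def\<close>)

lemma sigma_eq_self: assumes "sigma_move x y \<eta> = \<eta>" "x \<noteq> y" shows "\<eta> x = 0"
proof (rule ccontr)
  assume "\<eta> x \<noteq> 0"
  then have "sigma_move x y \<eta> x = \<eta> x - 1" using assms(2) by (simp add: sigma_move_def)
  then show False using assms(1) \<open>\<eta> x \<noteq> 0\<close> by (metis diff_less less_numeral_extra(1) less_irrefl_nat not_gr_zero)
qed

lemma total_rate:
  assumes "\<eta> \<in> config_space N" "\<And>x. r x x = 0"
  shows "incl_total_rate r d N \<eta> = (\<Sum>x\<in>UNIV. \<Sum>y\<in>UNIV. real (\<eta> x) * (d + real (\<eta> y)) * r x y)"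
proof -
  have "incl_total_rate r d N \<eta> = (\<Sum>x\<in>UNIV. \<Sum>y\<in>UNIV. \<Sum>\<zeta>\<in>config_space N.
      if sigma_move x y \<eta> = \<zeta> \<and> \<zeta> \<noteq> \<eta> then real (\<eta> x) * (d + real (\<eta> y)) * r x y else 0)"
    unfolding incl_total_rate_def incl_rate_def
    by (subst sum.swap) (simp add: sum.swap[of _ UNIV "config_space N"])
  also have "\<dots> = (\<Sum>x\<in>UNIV. \<Sum>y\<in>UNIV. real (\<eta> x) * (d + real (\<eta> y)) * r x y)"
  proof (intro sum.cong refl)
    fix x y
    have "(\<Sum>\<zeta>\<in>config_space N.
      if sigma_move x y \<eta> = \<zeta> \<and> \<zeta> \<noteq> \<eta> then real (\<eta> x) * (d + real (\<eta> y)) * r x y else 0)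
      = (\<Sum>\<zeta>\<in>config_space N.
      if sigma_move x y \<eta> = \<zeta> then (if sigma_move x y \<eta> \<noteq> \<eta> then real (\<eta> x) * (d + real (\<eta> y)) * r x y else 0) else 0)"
      by (rule sum.cong) auto
    also have "\<dots> = (if sigma_move x y \<eta> \<noteq> \<eta> then real (\<eta> x) * (d + real (\<eta> y)) * r x y else 0)"
      by (cases "sigma_move x y \<eta> \<noteq> \<eta>") (simp_all only: if_True if_False sum.delta'[OF config_fin] sigma_config[OF assms(1)] sum.neutral_const if_cancel)
    also have "\<dots> = real (\<eta> x) * (d + real (\<eta> y)) * r x y"
      using sigma_eq_self[of x y \<eta>] assms(2) by (cases "x = y") auto
    finally show "(\<Sum>\<zeta>\<in>config_space N.
      if sigma_move x y \<eta> = \<zeta> \<and> \<zeta> \<noteq> \<eta> then real (\<eta> x) * (d + real (\<eta> y)) * r x y else 0)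
      = real (\<eta> x) * (d + real (\<eta> y)) * r x y" .
  qed
  finally show ?thesis .
qed

lemma rate_nonneg: assumes "\<And>x y. 0 \<le> r x y" "0 \<le> d" shows "0 \<le> incl_rate r d \<eta> \<zeta>"
  unfolding incl_rate_def using assms by (auto intro!: sum_nonneg)

lemma rate_ge:
  assumes "\<And>x y. 0 \<le> r x y" "0 \<le> d" "sigma_move x y \<eta> = \<zeta>" "\<zeta> \<noteq> \<eta>"
  shows "real (\<eta> x) * (d + real (\<eta> y)) * r x y \<le> incl_rate r d \<eta> \<zeta>"
proof -
  let ?g = "\<lambda>x y. if sigma_move x y \<eta> = \<zeta> \<and> \<zeta> \<noteq> \<eta> then real (\<eta> x) * (d + real (\<eta> y)) * r x y else 0"
  have nn: "0 \<le> ?g x y" for x y using assms by auto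
  have "real (\<eta> x) * (d + real (\<eta> y)) * r x y = ?g x y" using assms by simp
  also have "\<dots> \<le> (\<Sum>y'\<in>UNIV. ?g x y')" by (rule member_le_sum) (use nn in auto)
  also have "\<dots> \<le> (\<Sum>x'\<in>UNIV. \<Sum>y'\<in>UNIV. ?g x' y')"
    by (rule member_le_sum[where f="\<lambda>x'. \<Sum>y'\<in>UNIV. ?g x' y'"]) (use nn in \<open>auto intro: sum_nonneg\<close>)
  finally show ?thesis by (simp add: incl_rate_def)
qed

lemma jump_kernel:
  assumes "\<And>x y. 0 \<le> r x y" "0 \<le> d"
  shows "kernel (incl_jump r d N) (config_space N)"
proof
  show "finite (config_space N)" by (rule config_fin)
  show "0 \<le> incl_jump r d N x y" for x y
    unfolding incl_jump_def incl_total_rate_def using assms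
    by (auto intro!: divide_nonneg_nonneg sum_nonneg rate_nonneg)
  show "(\<Sum>y\<in>config_space N. incl_jump r d N x y) \<le> 1" for x
    unfolding incl_jump_def sum_divide_distrib[symmetric] incl_total_rate_def[symmetric]
    by (cases "incl_total_rate r d N x = 0") auto
qed

lemma sum_zeta:
  fixes x c :: "'a::finite"
  assumes "x \<noteq> c"
  shows "(\<Sum>z\<in>UNIV. real (zeta_conf N x c j z) * g z) = real (N - j) * g x + real j * g c"
proof -
  have "\<And>z. real (zeta_conf N x c j z) * g z = (if z = x then real (N - j) * g x else 0) + (if z = c then real j * g c else 0)"
    using assms by (auto simp: zeta_conf_def)
  then have "(\<Sum>z\<in>UNIV. real (zeta_conf N x c j z) * g z) = (\<Sum>z\<in>UNIV. (if z = x then real (N - j) * g x else 0) + (if z = c then real j * g c else 0))"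
    by (intro sum.cong) auto
  also have "\<dots> = real (N - j) * g x + real j * g c" by (simp add: sum.distrib sum.delta)
  finally show ?thesis .
qed

lemma zeta_config: assumes "x \<noteq> c" "j \<le> N" shows "zeta_conf N x c j \<in> config_space N"
proof -
  have "real (\<Sum>z\<in>UNIV. zeta_conf N x c j z) = (\<Sum>z\<in>UNIV. real (zeta_conf N x c j z) * 1)" by simp
  also have "\<dots> = real N" using sum_zeta[OF assms(1), of N j "\<lambda>_. 1"] assms by simp
  finally show ?thesis unfolding config_space_def by (simp only: of_nat_eq_iff mem_Collect_eq)
qed

lemma xi_config: "xi_conf N x \<in> config_space N"
  by (simp add: config_space_def xi_conf_def)

lemma zeta_0: "zeta_conf N x c 0 = xi_conf N x"
  by (auto simp: zeta_conf_def xi_conf_def)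

lemma zeta_N: "x \<noteq> c \<Longrightarrow> zeta_conf N x c N = xi_conf N c"
  by (auto simp: zeta_conf_def xi_conf_def)

lemma zeta_not_xi: assumes "x \<noteq> c" "1 \<le> j" "j < N" shows "zeta_conf N x c j \<noteq> xi_conf N y"
proof
  assume e: "zeta_conf N x c j = xi_conf N y"
  show False
  proof (cases "y = x")
    case True then show False using fun_cong[OF e, of c] assms by (auto simp: zeta_conf_def xi_conf_def)
  next
    case False then show False using fun_cong[OF e, of x] assms by (auto simp: zeta_conf_def xi_conf_def)
  qed
qed

lemma zeta_inj: assumes "zeta_conf N x c j = zeta_conf N x c k" "x \<noteq> c" "j \<le> N" "k \<le> N" shows "j = k"
  using fun_cong[OF assms(1), of c] assms(2) by (simp add: zeta_conf_def)

lemma sigma_down: assumes "x \<noteq> c" "1 \<le> j" "j \<le> N"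
  shows "sigma_move c x (zeta_conf N x c j) = zeta_conf N x c (j - 1)"
  using assms by (auto simp: sigma_move_def zeta_conf_def fun_eq_iff)

lemma sigma_up: assumes "x \<noteq> c" "j < N"
  shows "sigma_move x c (zeta_conf N x c j) = zeta_conf N x c (Suc j)"
  using assms by (auto simp: sigma_move_def zeta_conf_def fun_eq_iff)

lemma total_zeta:
  assumes "x \<noteq> c" "j \<le> N" "\<And>z. r z z = 0"
  shows "incl_total_rate r d N (zeta_conf N x c j)
    = real (N - j) * (d * (\<Sum>y\<in>UNIV. r x y) + real j * r x c) + real j * (d * (\<Sum>y\<in>UNIV. r c y) + real (N - j) * r c x)"
proof -
  let ?\<eta> = "zeta_conf N x c j"
  have inner: "(\<Sum>y\<in>UNIV. (d + real (?\<eta> y)) * r z y) = d * (\<Sum>y\<in>UNIV. r z y) + (real (N - j) * r z x + real j * r z c)" for z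
    using sum_zeta[OF assms(1), of N j "r z"]
    by (simp add: distrib_right sum.distrib sum_distrib_left)
  have "incl_total_rate r d N ?\<eta> = (\<Sum>z\<in>UNIV. real (?\<eta> z) * (\<Sum>y\<in>UNIV. (d + real (?\<eta> y)) * r z y))"
    by (simp add: total_rate[OF zeta_config[OF assms(1,2)] assms(3)] sum_distrib_left mult.assoc)
  also have "\<dots> = real (N - j) * (\<Sum>y\<in>UNIV. (d + real (?\<eta> y)) * r x y) + real j * (\<Sum>y\<in>UNIV. (d + real (?\<eta> y)) * r c y)"
    by (rule sum_zeta[OF assms(1)])
  finally show ?thesis by (simp add: inner assms(3))
qed

lemma max_principle:
  fixes u v Dl Ul T :: "nat \<Rightarrow> real" and N :: nat
  assumes b0: "u 0 \<le> v 0" and bN: "u N \<le> v N" and u1: "\<And>j. j \<le> N \<Longrightarrow> u j \<le> 1"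
   and coef: "\<And>j. 1 \<le> j \<Longrightarrow> j < N \<Longrightarrow> 0 \<le> Dl j \<and> 0 \<le> Ul j \<and> Dl j + Ul j \<le> T j"
   and sub: "\<And>j. 1 \<le> j \<Longrightarrow> j < N \<Longrightarrow> T j * u j \<le> Dl j * u (j-1) + Ul j * u (Suc j) + (T j - Dl j - Ul j)"
   and sup: "\<And>j. 1 \<le> j \<Longrightarrow> j < N \<Longrightarrow> v j < 1 \<Longrightarrow> Dl j * v (j-1) + Ul j * v (Suc j) + (T j - Dl j - Ul j) < T j * v j"
   and jN: "j \<le> N"
  shows "u j \<le> v j"
proof -
  define w where "w k = u k - v k" for k
  define M where "M = Max (w ` {..N})"
  have fin: "finite (w ` {..N})" by simp
  have wM: "w k \<le> M" if "k \<le> N" for k unfolding M_def by (rule Max_ge) (use that in auto)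
  show ?thesis
  proof (rule ccontr)
    assume "\<not> u j \<le> v j"
    then have "0 < M" using wM[OF jN] by (simp add: w_def)
    obtain k where k: "k \<le> N" "w k = M"
      using Max_in[OF fin] unfolding M_def[symmetric] by auto
    have "k \<noteq> 0"
    proof
      assume "k = 0" then show False using k b0 \<open>0 < M\<close> by (simp add: w_def)
    qed
    moreover have "k \<noteq> N"
    proof
      assume "k = N" then show False using k bN \<open>0 < M\<close> by (simp add: w_def)
    qed
    ultimately have k1: "1 \<le> k" "k < N" using k by auto
    have "v k < 1" using u1[OF k(1)] k(2) \<open>0 < M\<close> by (simp add: w_def)
    note c = coef[OF k1]
    have "T k * w k < Dl k * w (k-1) + Ul k * w (Suc k)"
      using sub[OF k1] sup[OF k1 \<open>v k < 1\<close>] by (simp add: w_def algebra_simps)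
    also have "\<dots> \<le> Dl k * M + Ul k * M"
      using c wM[of "k-1"] wM[of "Suc k"] k1 by (intro add_mono mult_left_mono) auto
    also have "\<dots> \<le> T k * M" using c \<open>0 < M\<close> by (simp add: distrib_right[symmetric])
    finally show False using k(2) by simp
  qed
qed

lemma supersol:
  fixes N J j :: nat and dd rcx rxc K \<omega> \<sigma> Dl Ul T :: real and v :: "nat \<Rightarrow> real"
  assumes dd: "0 < dd" and r: "0 < rxc" "rxc < rcx" and om: "0 < \<omega>" "\<omega> < 1"
    and drift: "(1 + dd) * rxc \<le> \<omega> * rcx" and K: "0 < K"
    and sig: "\<sigma> = 8 * dd * K / (rcx * (1 - \<omega>))" and J: "J = N - N div 4"
    and j: "1 \<le> j" "j < N" and v: "v = (\<lambda>j. if j < J then \<sigma> * harm j + \<omega> ^ (J - j) else 1)"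
    and vj: "v j < 1"
    and Dl: "Dl = real j * (dd + real (N - j)) * rcx" and Ul: "Ul = real (N - j) * (dd + real j) * rxc"
    and T1: "Dl + Ul \<le> T" and T2: "T \<le> Dl + Ul + dd * real N * K"
  shows "Dl * v (j-1) + Ul * v (Suc j) + (T - Dl - Ul) < T * v j"
proof -
  define E where "E = T - Dl - Ul"
  have E0: "0 \<le> E" "E \<le> dd * real N * K" using T1 T2 by (auto simp: E_def)
  have jJ: "j < J" using vj v by (auto split: if_splits)
  define q where "q = \<omega> ^ (J - j - 1)"
  define H where "H = (harm j :: real)"
  have q0: "0 \<le> q" using om by (simp add: q_def)
  have s0: "0 \<le> \<sigma>" using sig dd K r om by (auto intro!: divide_nonneg_nonneg mult_nonneg_nonneg)
  have H0: "0 \<le> H" by (simp add: H_def harm_nonneg)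
  define m where "m = J - j - 1"
  have Jm: "J - j = Suc m" using jJ by (simp add: m_def)
  have pw: "\<omega> ^ (J - j) = \<omega> * q" unfolding q_def Jm by simp
  have Jm2: "J - (j - 1) = Suc (J - j)" using jJ j by simp
  have pw2: "\<omega> ^ (J - (j - 1)) = \<omega> * (\<omega> * q)" unfolding Jm2 by (simp only: power_Suc pw)
  have hj: "harm j = harm (j - 1) + 1 / real j" using j harm_Suc[of "j-1"]
    by (simp add: divide_inverse)
  have hj1: "harm (Suc j) = H + 1 / real (Suc j)" by (simp add: H_def harm_Suc divide_inverse)
  have vj': "v j = \<sigma> * H + \<omega> * q" using jJ pw by (simp add: v H_def)
  have vjm: "v (j - 1) = \<sigma> * (H - 1 / real j) + \<omega> * (\<omega> * q)" using jJ pw2 hj by (simp add: v H_def)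
  have vjp: "v (Suc j) \<le> \<sigma> * (H + 1 / real (Suc j)) + q"
  proof (cases "Suc j < J")
    case True
    then have "J - Suc j = J - j - 1" by simp
    then show ?thesis using True hj1 by (simp add: v q_def)
  next
    case False
    then have "J - j - 1 = 0" using jJ by simp
    then have "q = 1" by (simp add: q_def)
    moreover have "0 \<le> \<sigma> * (H + 1 / real (Suc j))" using s0 H0 by simp
    ultimately show ?thesis using False by (simp add: v)
  qed
  have vj0: "0 \<le> v j" using vj' s0 H0 q0 om by simp
  define b where "b = \<sigma> / real (Suc j) + q * (1 - \<omega>)"
  have b0: "0 \<le> b" using s0 q0 om by (simp add: b_def)
  have diff1: "v j - v (j - 1) = \<sigma> / real j + \<omega> * q * (1 - \<omega>)"
    using vj' vjm by (simp add: algebra_simps)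
  have diff2: "v (Suc j) - v j \<le> b" using vjp vj' by (simp add: b_def algebra_simps)
  have NJ: "real N / 4 \<le> real (N - j)"
  proof -
    have "j + N div 4 + 1 \<le> N" using jJ J by simp
    then have "real (N div 4) + 1 \<le> real (N - j)" by linarith
    moreover have "real N / 4 \<le> real (N div 4) + 1"
    proof -
      have "N \<le> 4 * (N div 4) + 3" by presburger
      then have "real N \<le> 4 * real (N div 4) + 3" by linarith
      then show ?thesis by simp
    qed
    ultimately show ?thesis by linarith
  qed
  have Dl0: "0 \<le> Dl" using Dl dd r by simp
  have Ul_le: "Ul \<le> \<omega> * Dl"
  proof -
    have "real (N - j) * (dd + real j) \<le> real j * (dd + real (N - j)) * (1 + dd)"
    proof -
      have "real (N - j) * (dd + real j) \<le> real (N - j) * (real j * (1 + dd))"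
        using j dd by (intro mult_left_mono) (auto simp: algebra_simps)
      also have "\<dots> \<le> real j * (dd + real (N - j)) * (1 + dd)"
        using j dd by (simp add: algebra_simps)
      finally show ?thesis .
    qed
    note ineq = this
    have "Ul \<le> real j * (dd + real (N - j)) * ((1 + dd) * rxc)"
      using mult_right_mono[OF ineq, of rxc] r by (simp add: Ul mult.assoc)
    also have "\<dots> \<le> real j * (dd + real (N - j)) * (\<omega> * rcx)"
      using drift dd by (intro mult_left_mono) auto
    finally show ?thesis by (simp add: Dl algebra_simps)
  qed
  have key: "Dl * \<sigma> * (1 - \<omega>) / real j \<ge> 2 * dd * K * real N"
  proof -
    have "Dl / real j = (dd + real (N - j)) * rcx" using j by (simp add: Dl)
    also have "\<dots> \<ge> real N / 4 * rcx" using NJ dd r by (intro mult_right_mono) auto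
    finally have "real N / 4 * rcx \<le> Dl / real j" .
    then have "real N / 4 * rcx * (\<sigma> * (1 - \<omega>)) \<le> Dl / real j * (\<sigma> * (1 - \<omega>))"
      using s0 om by (intro mult_right_mono) auto
    moreover have "real N / 4 * rcx * (\<sigma> * (1 - \<omega>)) = 2 * dd * K * real N"
    proof -
      have nz: "rcx * (1 - \<omega>) \<noteq> 0" using r om by simp
      have s1: "\<sigma> * (rcx * (1 - \<omega>)) = 8 * dd * K" unfolding sig using nz by simp
      have "real N / 4 * rcx * (\<sigma> * (1 - \<omega>)) = real N / 4 * (\<sigma> * (rcx * (1 - \<omega>)))"
        by (simp only: ac_simps)
      also have "\<dots> = 2 * dd * K * real N" unfolding s1 by simp
      finally show ?thesis .
    qed
    ultimately have "2 * dd * K * real N \<le> Dl / real j * (\<sigma> * (1 - \<omega>))" by linarith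
    also have "Dl / real j * (\<sigma> * (1 - \<omega>)) = Dl * \<sigma> * (1 - \<omega>) / real j" by simp
    finally show ?thesis .
  qed
  have frac: "(1 - \<omega>) / real j \<le> 1 / real j - \<omega> / real (Suc j)"
  proof -
    have "\<omega> / real (Suc j) \<le> \<omega> / real j" using j om by (intro divide_left_mono) auto
    then show ?thesis by (simp add: diff_divide_distrib)
  qed
  have "Dl * \<sigma> * (1 - \<omega>) / real j \<le> Dl * \<sigma> * (1 / real j - \<omega> / real (Suc j))"
    using mult_left_mono[OF frac, of "Dl * \<sigma>"] Dl0 s0 by simp
  also have "\<dots> = Dl * (\<sigma> / real j + \<omega> * q * (1 - \<omega>)) - \<omega> * Dl * b"
    by (simp add: b_def algebra_simps diff_divide_distrib)
  also have "\<dots> = Dl * (v j - v (j - 1)) - \<omega> * Dl * b"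
    by (simp only: diff1)
  also have "\<dots> \<le> Dl * (v j - v (j - 1)) - Ul * (v (Suc j) - v j)"
  proof -
    have "Ul * (v (Suc j) - v j) \<le> Ul * b"
      using diff2 Ul r dd by (intro mult_left_mono) auto
    also have "\<dots> \<le> \<omega> * Dl * b" using Ul_le b0 by (intro mult_right_mono) auto
    finally show ?thesis by simp
  qed
  finally have A: "2 * dd * K * real N \<le> Dl * (v j - v (j - 1)) - Ul * (v (Suc j) - v j)"
    using key by linarith
  have B: "E * (1 - v j) \<le> dd * real N * K"
  proof -
    have "E * (1 - v j) \<le> E * 1" using E0 vj0 by (intro mult_left_mono) auto
    then show ?thesis using E0 by simp
  qed
  have N0: "0 < dd * real N * K" using j dd K by simp
  have "Dl * (v j - v (j - 1)) - Ul * (v (Suc j) - v j) - E * (1 - v j) > 0"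
    using A B N0 by (simp add: algebra_simps)
  then show ?thesis by (simp add: E_def algebra_simps)
qed

lemma T_facts:
  fixes r :: "'a::finite \<Rightarrow> 'a \<Rightarrow> real"
  assumes r_nonneg: "\<And>x y. 0 \<le> r x y" and r_diag: "\<And>x. r x x = 0"
    and dd: "0 < dd" and xc: "x \<noteq> c" and j: "1 \<le> j" "j < N" and rcx: "0 < r c x"
  defines "T \<equiv> incl_total_rate r dd N (zeta_conf N x c j)"
    and "Dl \<equiv> real j * (dd + real (N - j)) * r c x"
    and "Ul \<equiv> real (N - j) * (dd + real j) * r x c"
    and "K \<equiv> (\<Sum>y\<in>UNIV. r x y) + (\<Sum>y\<in>UNIV. r c y) + 1"
  shows "Dl + Ul \<le> T" "T \<le> Dl + Ul + dd * real N * K" "0 < T" "0 \<le> Dl" "0 \<le> Ul" "0 < Dl"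
proof -
  define a where "a = real (N - j)"
  define b where "b = real j"
  define Rx where "Rx = (\<Sum>y\<in>UNIV. r x y)"
  define Rc where "Rc = (\<Sum>y\<in>UNIV. r c y)"
  have NN: "real N = a + b" using j by (simp add: a_def b_def)
  have a0: "0 < a" using j by (simp add: a_def)
  have b0: "1 \<le> b" using j by (simp add: b_def)
  have Rx: "r x c \<le> Rx" unfolding Rx_def by (rule member_le_sum) (auto intro: r_nonneg)
  have Rc: "r c x \<le> Rc" unfolding Rc_def by (rule member_le_sum) (auto intro: r_nonneg)
  have rxc: "0 \<le> r x c" by (rule r_nonneg)
  have Teq: "T = a * (dd * Rx + b * r x c) + b * (dd * Rc + a * r c x)"
  proof -
    have "incl_total_rate r dd N (zeta_conf N x c j) = real (N - j) * (dd * (\<Sum>y\<in>UNIV. r x y) + real j * r x c) + real j * (dd * (\<Sum>y\<in>UNIV. r c y) + real (N - j) * r c x)"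
      by (rule total_zeta) (use xc j r_diag in auto)
    then show ?thesis unfolding T_def by (simp add: a_def b_def Rx_def Rc_def)
  qed
  have E: "T - Dl - Ul = dd * (a * (Rx - r x c) + b * (Rc - r c x))"
    unfolding Teq Dl_def Ul_def a_def[symmetric] b_def[symmetric] by (simp add: algebra_simps)
  have E0: "0 \<le> a * (Rx - r x c) + b * (Rc - r c x)" using a0 b0 Rx Rc by simp
  show "Dl + Ul \<le> T" using E mult_nonneg_nonneg[OF _ E0, of dd] dd by linarith
  have "a * (Rx - r x c) + b * (Rc - r c x) \<le> a * Rx + b * Rc"
    using a0 b0 rxc r_nonneg[of c x] by (simp add: algebra_simps)
  also have "\<dots> \<le> (a + b) * K"
  proof -
    have "0 \<le> Rx" "0 \<le> Rc" using Rx Rc rxc r_nonneg[of c x] by linarith+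
    then have "a * Rx \<le> a * K" "b * Rc \<le> b * K" using a0 b0
      by (auto intro!: mult_left_mono simp: K_def Rx_def[symmetric] Rc_def[symmetric])
    then show ?thesis by (simp add: distrib_right)
  qed
  finally have "T - Dl - Ul \<le> dd * (real N * K)" unfolding E NN using dd by (intro mult_left_mono) auto
  then show "T \<le> Dl + Ul + dd * real N * K" by (simp add: algebra_simps)
  show "0 < Dl" using dd b0 a0 rcx by (simp add: Dl_def b_def[symmetric] a_def[symmetric])
  then show "0 \<le> Dl" by simp
  show "0 \<le> Ul" using dd b0 a0 rxc by (simp add: Ul_def b_def[symmetric] a_def[symmetric])
  show "0 < T" using \<open>Dl + Ul \<le> T\<close> \<open>0 < Dl\<close> \<open>0 \<le> Ul\<close> by linarith
qed

lemma hit_line: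
  fixes r :: "'a::finite \<Rightarrow> 'a \<Rightarrow> real"
  assumes r_nonneg: "\<And>x y. 0 \<le> r x y" and r_diag: "\<And>x. r x x = 0"
    and dd: "0 < dd" and xc: "x \<noteq> c" and j: "1 \<le> j" "j < N" and rcx: "0 < r c x"
    and notin: "zeta_conf N x c j \<notin> \<A>" "zeta_conf N x c j \<notin> \<B>"
  defines "T \<equiv> incl_total_rate r dd N (zeta_conf N x c j)"
    and "Dl \<equiv> real j * (dd + real (N - j)) * r c x"
    and "Ul \<equiv> real (N - j) * (dd + real j) * r x c"
    and "h \<equiv> incl_hit r dd N \<A> \<B>"
  shows "Dl * h (zeta_conf N x c (j - 1)) + Ul * h (zeta_conf N x c (Suc j)) \<le> T * h (zeta_conf N x c j)"
    "T * h (zeta_conf N x c j) \<le> Dl * h (zeta_conf N x c (j - 1)) + Ul * h (zeta_conf N x c (Suc j)) + (T - Dl - Ul)"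
proof -
  interpret kernel "incl_jump r dd N" "config_space N" by (rule jump_kernel) (use r_nonneg dd in auto)
  note TF = T_facts[OF r_nonneg r_diag dd xc j rcx]
  have T0: "0 < T" using TF unfolding T_def by simp
  let ?z = "zeta_conf N x c"
  have zj: "?z j \<in> config_space N" "?z (j - 1) \<in> config_space N" "?z (Suc j) \<in> config_space N"
    using zeta_config[OF xc] j by auto
  have ne: "?z (j - 1) \<noteq> ?z (Suc j)" "?z (j - 1) \<noteq> ?z j" "?z (Suc j) \<noteq> ?z j"
    using zeta_inj[OF _ xc] j by fastforce+
  have p1: "Dl / T \<le> incl_jump r dd N (?z j) (?z (j - 1))"
    unfolding incl_jump_def T_def[symmetric]
    using rate_ge[where d=dd, OF r_nonneg _ sigma_down[OF xc j(1)] ne(2)] dd j T0 xc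
    by (intro divide_right_mono) (auto simp: Dl_def zeta_conf_def)
  have p2: "Ul / T \<le> incl_jump r dd N (?z j) (?z (Suc j))"
    unfolding incl_jump_def T_def[symmetric]
    using rate_ge[where d=dd, OF r_nonneg _ sigma_up[OF xc j(2)] ne(3)] dd j T0 xc
    by (intro divide_right_mono) (auto simp: Ul_def zeta_conf_def)
  have p0: "0 \<le> Dl / T" "0 \<le> Ul / T" using TF T0 by (auto simp: Dl_def Ul_def T_def)
  have L: "Dl / T * h (?z (j - 1)) + Ul / T * h (?z (Suc j)) \<le> h (?z j)"
    unfolding h_def incl_hit_def
    by (rule harm_lower[OF zj(1) notin zj(2,3) ne(1) p0(1) p1 p0(2) p2])
  have U: "h (?z j) \<le> Dl / T * h (?z (j - 1)) + Ul / T * h (?z (Suc j)) + (1 - Dl / T - Ul / T)"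
    unfolding h_def incl_hit_def
    by (rule harm_upper[OF zj(1) notin zj(2,3) ne(1) p0(1) p1 p0(2) p2])
  show "Dl * h (?z (j - 1)) + Ul * h (?z (Suc j)) \<le> T * h (?z j)"
    using mult_left_mono[OF L, of T] T0 by (simp add: algebra_simps)
  show "T * h (?z j) \<le> Dl * h (?z (j - 1)) + Ul * h (?z (Suc j)) + (T - Dl - Ul)"
    using mult_left_mono[OF U, of T] T0 by (simp add: algebra_simps)
qed

lemma harm_le_ln: assumes "i \<le> N" "1 \<le> N" shows "(harm i :: real) \<le> 1 + ln (real N)"
proof (cases "i = 0")
  case True then show ?thesis using assms by (simp add: harm_def)
next
  case False
  have "harm i - ln (real i) \<le> harm 1 - ln (real (1::nat))"
    by (rule euler_mascheroni_sequence_decreasing) (use False in auto)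
  moreover have "harm 1 = (1::real)" by (simp add: harm_def)
  moreover have "ln (real i) \<le> ln (real N)" using False assms by simp
  ultimately show ?thesis by simp
qed

lemma case_limit:
  fixes r :: "'a::finite \<Rightarrow> 'a \<Rightarrow> real" and d :: "nat \<Rightarrow> real" and U :: "nat \<Rightarrow> nat \<Rightarrow> real"
  assumes r_nonneg: "\<And>x y. 0 \<le> r x y" and r_diag: "\<And>x. r x x = 0"
    and d_pos: "\<And>N. 0 < d N" and d_lim: "d \<longlonglongrightarrow> 0"
    and d_log_lim: "(\<lambda>N. d N * ln (real N)) \<longlonglongrightarrow> 0"
    and xc: "x \<noteq> c" and rxc: "0 < r x c" and rcx: "r x c < r c x"
    and H1: "\<And>N i. i \<le> N \<Longrightarrow> 0 \<le> U N i \<and> U N i \<le> 1"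
    and H2: "\<And>N. 2 \<le> N \<Longrightarrow> U N 0 = 0"
    and H3: "\<And>N j. 2 \<le> N \<Longrightarrow> 1 \<le> j \<Longrightarrow> j < N \<Longrightarrow>
      incl_total_rate r (d N) N (zeta_conf N x c j) * U N j
        \<le> real j * (d N + real (N - j)) * r c x * U N (j - 1)
          + real (N - j) * (d N + real j) * r x c * U N (Suc j)
          + (incl_total_rate r (d N) N (zeta_conf N x c j) - real j * (d N + real (N - j)) * r c x
             - real (N - j) * (d N + real j) * r x c)"
  shows "(\<lambda>N. Max {U N i | i. i \<le> N div 2}) \<longlonglongrightarrow> 0"
proof -
  define \<omega> where "\<omega> = (1 + r x c / r c x) / 2"
  have rcx0: "0 < r c x" using rxc rcx by linarith
  have om: "0 < \<omega>" "\<omega> < 1" using rxc rcx rcx0 by (auto simp: \<omega>_def field_simps)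
  have omr: "\<omega> * r c x = (r c x + r x c) / 2" using rcx0 by (simp add: \<omega>_def field_simps)
  define K where "K = (\<Sum>y\<in>UNIV. r x y) + (\<Sum>y\<in>UNIV. r c y) + 1"
  have K0: "0 < K" unfolding K_def using r_nonneg by (auto intro!: add_nonneg_pos add_nonneg_nonneg sum_nonneg)
  define C where "C = 8 * K / (r c x * (1 - \<omega>))"
  define bound where "bound N = C * d N * (1 + ln (real N)) + \<omega> ^ (N div 4)" for N
  define \<delta> where "\<delta> = (\<omega> * r c x - r x c) / r x c"
  have \<delta>0: "0 < \<delta>" using omr rcx rxc by (simp add: \<delta>_def)
  have ev: "eventually (\<lambda>N. d N < \<delta>) sequentially" using order_tendstoD(2)[OF d_lim \<delta>0] .
  have main: "U N i \<le> bound N" if N2: "2 \<le> N" and dN: "d N < \<delta>" and i: "i \<le> N div 2" for N i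
  proof -
    define dd where "dd = d N"
    have dd0: "0 < dd" using d_pos by (simp add: dd_def)
    have drift: "(1 + dd) * r x c \<le> \<omega> * r c x"
    proof -
      have "dd * r x c \<le> \<delta> * r x c" using dN rxc by (simp add: dd_def)
      also have "\<delta> * r x c = \<omega> * r c x - r x c" using rxc by (simp add: \<delta>_def)
      finally show ?thesis by (simp add: algebra_simps)
    qed
    define \<sigma> where "\<sigma> = 8 * dd * K / (r c x * (1 - \<omega>))"
    define J where "J = N - N div 4"
    define v where "v = (\<lambda>j. if j < J then \<sigma> * harm j + \<omega> ^ (J - j) else (1::real))"
    define T where "T j = incl_total_rate r dd N (zeta_conf N x c j)" for j
    define Dl where "Dl j = real j * (dd + real (N - j)) * r c x" for j
    define Ul where "Ul j = real (N - j) * (dd + real j) * r x c" for j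
    have J0: "0 < J" "J \<le> N" using N2 by (auto simp: J_def)
    have iJ: "i < J" "N div 4 \<le> J - i"
    proof -
      have f: "4 * (N div 4) \<le> N" "2 * (N div 2) \<le> N" by simp_all
      have g: "N < 4 * (N div 4) + 4" by simp
      show "i < J" "N div 4 \<le> J - i" using f g i N2 unfolding J_def by linarith+
    qed
    have TF: "Dl j + Ul j \<le> T j" "T j \<le> Dl j + Ul j + dd * real N * K" "0 \<le> Dl j" "0 \<le> Ul j"
      if "1 \<le> j" "j < N" for j
      using T_facts[OF r_nonneg r_diag dd0 xc that rcx0] unfolding T_def Dl_def Ul_def K_def by auto
    have uv: "U N i \<le> v i"
    proof (rule max_principle[where u="U N" and v=v and Dl=Dl and Ul=Ul and T=T and N=N])
      show "U N 0 \<le> v 0" using H2[OF N2] J0 om by (simp add: v_def harm_def)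
      show "U N N \<le> v N" using H1[of N N] J0 by (simp add: v_def)
      show "\<And>j. j \<le> N \<Longrightarrow> U N j \<le> 1" using H1 by blast
      show "\<And>j. 1 \<le> j \<Longrightarrow> j < N \<Longrightarrow> 0 \<le> Dl j \<and> 0 \<le> Ul j \<and> Dl j + Ul j \<le> T j" using TF by blast
      show "\<And>j. 1 \<le> j \<Longrightarrow> j < N \<Longrightarrow> T j * U N j \<le> Dl j * U N (j - 1) + Ul j * U N (Suc j) + (T j - Dl j - Ul j)"
        using H3[OF N2] unfolding T_def Dl_def Ul_def dd_def by blast
      show "\<And>j. 1 \<le> j \<Longrightarrow> j < N \<Longrightarrow> v j < 1 \<Longrightarrow> Dl j * v (j - 1) + Ul j * v (Suc j) + (T j - Dl j - Ul j) < T j * v j"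
      proof -
        fix j assume j: "1 \<le> j" "j < N" "v j < 1"
        show "Dl j * v (j - 1) + Ul j * v (Suc j) + (T j - Dl j - Ul j) < T j * v j"
          by (rule supersol[OF dd0 rxc rcx om drift K0 \<sigma>_def J_def j(1,2) v_def j(3) Dl_def Ul_def TF(1,2)[OF j(1,2)]])
      qed
      show "i \<le> N" using i by simp
    qed
    have "v i = \<sigma> * harm i + \<omega> ^ (J - i)" using iJ by (simp add: v_def)
    also have "\<dots> \<le> \<sigma> * (1 + ln (real N)) + \<omega> ^ (N div 4)"
    proof (rule add_mono)
      have "0 \<le> \<sigma>" using dd0 K0 om rcx0 by (simp add: \<sigma>_def)
      then show "\<sigma> * harm i \<le> \<sigma> * (1 + ln (real N))"
        using harm_le_ln[of i N] i N2 by (intro mult_left_mono) auto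
      show "\<omega> ^ (J - i) \<le> \<omega> ^ (N div 4)"
        by (rule power_decreasing) (use iJ om in auto)
    qed
    also have "\<sigma> * (1 + ln (real N)) + \<omega> ^ (N div 4) = bound N"
      by (simp add: bound_def \<sigma>_def C_def dd_def)
    finally show ?thesis using uv by simp
  qed
  have setEq: "{U N i | i. i \<le> N div 2} = U N ` {..N div 2}" for N by auto
  have lower: "eventually (\<lambda>N. 0 \<le> Max {U N i | i. i \<le> N div 2}) sequentially"
  proof (rule always_eventually, rule allI)
    fix N
    have "0 \<le> U N 0" using H1[of 0 N] by simp
    also have "U N 0 \<le> Max {U N i | i. i \<le> N div 2}" unfolding setEq by (rule Max_ge) auto
    finally show "0 \<le> Max {U N i | i. i \<le> N div 2}" .
  qed
  have upper: "eventually (\<lambda>N. Max {U N i | i. i \<le> N div 2} \<le> bound N) sequentially"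
    using ev eventually_ge_at_top[of 2]
  proof eventually_elim
    case (elim N)
    show ?case unfolding setEq using main[OF elim(2) elim(1)] by (subst Max_le_iff) auto
  qed
  have lim1: "(\<lambda>N. C * (d N + d N * ln (real N))) \<longlonglongrightarrow> C * (0 + 0)"
    by (intro tendsto_intros d_lim d_log_lim)
  have lim2: "(\<lambda>N. \<omega> ^ (N div 4)) \<longlonglongrightarrow> 0"
    using filterlim_compose[OF LIMSEQ_power_zero[of \<omega>] filterlim_at_top_div_const_nat[of 4]] om by simp
  have "(\<lambda>N. C * (d N + d N * ln (real N)) + \<omega> ^ (N div 4)) \<longlonglongrightarrow> C * (0 + 0) + 0"
    by (rule tendsto_add[OF lim1 lim2])
  moreover have "bound = (\<lambda>N. C * (d N + d N * ln (real N)) + \<omega> ^ (N div 4))"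
    by (rule ext) (simp add: bound_def algebra_simps)
  ultimately have limb: "bound \<longlonglongrightarrow> 0" by simp
  show ?thesis by (rule tendsto_sandwich[OF lower upper tendsto_const limb])
qed

lemma xi_inj: assumes "0 < N" "xi_conf N x = xi_conf N y" shows "x = y"
proof -
  have "xi_conf N x x = xi_conf N y x" using assms(2) by simp
  then show ?thesis using assms(1) by (simp add: xi_conf_def split: if_splits)
qed

theorem lemma4p4:
  fixes r :: "'a::finite \<Rightarrow> 'a \<Rightarrow> real" and m :: "'a \<Rightarrow> real" and d :: "nat \<Rightarrow> real"
    and A B :: "'a set" and a b c :: 'a
  assumes r_nonneg: "\<And>x y. 0 \<le> r x y"
    and r_diag: "\<And>x. r x x = 0"
    and irred: "irreducible_rates r"
    and m_nonneg: "\<And>x. 0 \<le> m x"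
    and m_prob: "(\<Sum>x\<in>UNIV. m x) = 1"
    and reversible: "\<And>x y. m x * r x y = m y * r y x"
    and d_pos: "\<And>N. 0 < d N"
    and d_lim: "d \<longlonglongrightarrow> 0"
    and d_log_lim: "(\<lambda>N. d N * ln (real N)) \<longlonglongrightarrow> 0"
    and disj: "A \<inter> B = {}"
    and aA: "a \<in> A" and bB: "b \<in> B"
    and ca: "r c a > r a c" and ac: "r a c > 0"
    and cb: "r c b > r b c" and bc: "r b c > 0"
  shows "(\<lambda>N. Max {\<bar>incl_hit r (d N) N (E_set N A) (E_set N B) (zeta_conf N a c i) - 1\<bar>
                   | i. i \<le> N div 2}) \<longlonglongrightarrow> 0
       \<and> (\<lambda>N. Max {incl_hit r (d N) N (E_set N A) (E_set N B) (zeta_conf N b c i)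
                   | i. i \<le> N div 2}) \<longlonglongrightarrow> 0"
proof
  have ac': "a \<noteq> c" using ca by auto
  have bc': "b \<noteq> c" using cb by auto
  let ?h = "\<lambda>N. incl_hit r (d N) N (E_set N A) (E_set N B)"
  have hb: "0 \<le> ?h N \<eta> \<and> ?h N \<eta> \<le> 1" if "\<eta> \<in> config_space N" for N \<eta>
  proof -
    interpret kernel "incl_jump r (d N) N" "config_space N"
      by (rule jump_kernel) (use r_nonneg d_pos in \<open>auto intro: less_imp_le\<close>)
    show ?thesis unfolding incl_hit_def by (rule hit_prob_bounds[OF that])
  qed
  have notin: "zeta_conf N x c j \<notin> E_set N A" "zeta_conf N x c j \<notin> E_set N B"
    if "x \<noteq> c" "1 \<le> j" "j < N" for x j N
    using zeta_not_xi[OF that] by (auto simp: E_set_def)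
  define U1 where "U1 N i = 1 - ?h N (zeta_conf N a c i)" for N i
  have "(\<lambda>N. Max {U1 N i | i. i \<le> N div 2}) \<longlonglongrightarrow> 0"
  proof (rule case_limit[OF r_nonneg r_diag d_pos d_lim d_log_lim ac' ac ca])
    show "0 \<le> U1 N i \<and> U1 N i \<le> 1" if "i \<le> N" for N i
      using hb[OF zeta_config[OF ac' that]] by (simp add: U1_def)
    show "U1 N 0 = 0" if "2 \<le> N" for N
      using aA by (simp add: U1_def zeta_0 incl_hit_def hit_prob_def E_set_def)
    fix N j :: nat assume N: "2 \<le> N" and j: "1 \<le> j" "j < N"
    show "incl_total_rate r (d N) N (zeta_conf N a c j) * U1 N j
        \<le> real j * (d N + real (N - j)) * r c a * U1 N (j - 1)
          + real (N - j) * (d N + real j) * r a c * U1 N (Suc j)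
          + (incl_total_rate r (d N) N (zeta_conf N a c j) - real j * (d N + real (N - j)) * r c a
             - real (N - j) * (d N + real j) * r a c)"
      using hit_line(1)[OF r_nonneg r_diag d_pos ac' j ca[THEN less_trans[OF ac]] notin[OF ac' j]]
      by (simp add: U1_def algebra_simps)
  qed
  moreover have "{\<bar>?h N (zeta_conf N a c i) - 1\<bar> | i. i \<le> N div 2} = {U1 N i | i. i \<le> N div 2}" for N
  proof -
    have "\<bar>?h N (zeta_conf N a c i) - 1\<bar> = U1 N i" if "i \<le> N div 2" for i
      using hb[OF zeta_config[OF ac', of i N]] that by (simp add: U1_def)
    then show ?thesis by (metis (no_types, lifting))
  qed
  ultimately show "(\<lambda>N. Max {\<bar>?h N (zeta_conf N a c i) - 1\<bar> | i. i \<le> N div 2}) \<longlonglongrightarrow> 0" by simp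
next
  have ac': "a \<noteq> c" using ca by auto
  have bc': "b \<noteq> c" using cb by auto
  let ?h = "\<lambda>N. incl_hit r (d N) N (E_set N A) (E_set N B)"
  have hb: "0 \<le> ?h N \<eta> \<and> ?h N \<eta> \<le> 1" if "\<eta> \<in> config_space N" for N \<eta>
  proof -
    interpret kernel "incl_jump r (d N) N" "config_space N"
      by (rule jump_kernel) (use r_nonneg d_pos in \<open>auto intro: less_imp_le\<close>)
    show ?thesis unfolding incl_hit_def by (rule hit_prob_bounds[OF that])
  qed
  have notin: "zeta_conf N x c j \<notin> E_set N A" "zeta_conf N x c j \<notin> E_set N B"
    if "x \<noteq> c" "1 \<le> j" "j < N" for x j N
    using zeta_not_xi[OF that] by (auto simp: E_set_def)
  define U2 where "U2 N i = ?h N (zeta_conf N b c i)" for N i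
  have "(\<lambda>N. Max {U2 N i | i. i \<le> N div 2}) \<longlonglongrightarrow> 0"
  proof (rule case_limit[OF r_nonneg r_diag d_pos d_lim d_log_lim bc' bc cb])
    show "0 \<le> U2 N i \<and> U2 N i \<le> 1" if "i \<le> N" for N i
      using hb[OF zeta_config[OF bc' that]] by (simp add: U2_def)
    show "U2 N 0 = 0" if "2 \<le> N" for N
    proof -
      have "xi_conf N b \<notin> E_set N A"
      proof
        assume "xi_conf N b \<in> E_set N A"
        then obtain y where "y \<in> A" "xi_conf N b = xi_conf N y" by (auto simp: E_set_def)
        then have "b \<in> A" using xi_inj[of N b y] that by auto
        then show False using bB disj by auto
      qed
      moreover have "xi_conf N b \<in> E_set N B" using bB by (simp add: E_set_def)
      ultimately show ?thesis by (simp add: U2_def zeta_0 incl_hit_def hit_prob_def)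
    qed
    fix N j :: nat assume N: "2 \<le> N" and j: "1 \<le> j" "j < N"
    show "incl_total_rate r (d N) N (zeta_conf N b c j) * U2 N j
        \<le> real j * (d N + real (N - j)) * r c b * U2 N (j - 1)
          + real (N - j) * (d N + real j) * r b c * U2 N (Suc j)
          + (incl_total_rate r (d N) N (zeta_conf N b c j) - real j * (d N + real (N - j)) * r c b
             - real (N - j) * (d N + real j) * r b c)"
      using hit_line(2)[OF r_nonneg r_diag d_pos bc' j cb[THEN less_trans[OF bc]] notin[OF bc' j]]
      by (simp add: U2_def algebra_simps)
  qed
  then show "(\<lambda>N. Max {?h N (zeta_conf N b c i) | i. i \<le> N div 2}) \<longlonglongrightarrow> 0"
    by (simp add: U2_def)
qed

end
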